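(* Fix an integer $N$. The part of the $E_1$-page $\mathrm{Ext}_\mathbb{C}[\rho]$ of the $\rho$-Bockstein spectral sequence lying in degrees $(s,f,w)$ with $s+f-w=N$ is a finitely generated $\mathbb{F}_2[\rho]$-module.
   Context: $\mathrm{Ext}_\mathbb{C}$ is the cohomology of the $\mathbb{C}$-motivic Steenrod algebra, $\mathrm{Ext}_{\mathcal{A}^\mathbb{C}}(\mathbb{F}_2[\tau],\mathbb{F}_2[\tau])$, trigraded by $(s,f,w)$ = (stem, Adams filtration, motivic weight). The $\rho$-Bockstein spectral sequence, obtained by filtering the cobar complex of the $\mathbb{R}$-motivic Steenrod algebra by powers of $\rho$, has $E_1=\mathrm{Ext}_\mathbb{C}[\rho]$ with $\rho$ in degree $(-1,0,-1)$ and converges to the cohomology of the $\mathbb{R}$-motivic Steenrod algebra. *)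

theory Defs
  imports Main
begin

text \<open>An F_2-vector with basis type 'b is represented by the finite set of basis
elements with nonzero coefficient; addition is symmetric difference.\<close>

definition vadd :: "'b set \<Rightarrow> 'b set \<Rightarrow> 'b set" where
  "vadd X Y = (X - Y) \<union> (Y - X)"

definition vsum :: "('i \<Rightarrow> 'b set) \<Rightarrow> 'i set \<Rightarrow> 'b set" where
  "vsum F I = {b. odd (card {i \<in> I. b \<in> F i})}"

text \<open>A_* = F_2[tau][tau_0, tau_1, ..., xi_1, xi_2, ...] / (tau_i^2 = tau xi_(i+1)).
As an F_2[tau]-module it is free on the monomials
prod tau_i^(e_i) prod xi_i^(n_i) with e_i in {0,1}.  Such a monomial is encoded
as a pair (E, n): E = set of indices i with e_i = 1, n = exponent function of
the xi_i (i >= 1, n 0 = 0).\<close>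

type_synonym mono = "nat set \<times> (nat \<Rightarrow> nat)"

definition mono_valid :: "mono \<Rightarrow> bool" where
  "mono_valid m = (finite (fst m) \<and> finite {i. snd m i \<noteq> 0} \<and> snd m 0 = 0)"

definition one_mono :: mono where
  "one_mono = ({}, (\<lambda>_. 0))"

definition tau_mono :: "nat \<Rightarrow> mono" where
  "tau_mono i = ({i}, (\<lambda>_. 0))"

text \<open>xi_j^p, with the convention xi_0 = 1.\<close>
definition xipow :: "nat \<Rightarrow> nat \<Rightarrow> mono" where
  "xipow j p = ({}, (if j = 0 then (\<lambda>_. 0) else (\<lambda>_. 0)(j := p)))"

text \<open>Product of monomials: returns (extra power of tau, reduced monomial),
using tau_i^2 = tau xi_(i+1).\<close>
definition mmul :: "mono \<Rightarrow> mono \<Rightarrow> nat \<times> mono" where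
  "mmul a b = (card (fst a \<inter> fst b),
     ((fst a - fst b) \<union> (fst b - fst a),
      (\<lambda>i. snd a i + snd b i + (if 1 \<le> i \<and> i - 1 \<in> fst a \<inter> fst b then 1 else 0))))"

text \<open>Internal (topological) degree and motivic weight of monomials:
|tau_i| = (2^(i+1) - 1, 2^i - 1), |xi_i| = (2^(i+1) - 2, 2^i - 1).\<close>
definition mdeg :: "mono \<Rightarrow> int" where
  "mdeg m = (\<Sum>i\<in>fst m. 2^(i+1) - 1) + (\<Sum>i\<in>{i. snd m i \<noteq> 0}. int (snd m i) * (2^(i+1) - 2))"

definition mwt :: "mono \<Rightarrow> int" where
  "mwt m = (\<Sum>i\<in>fst m. 2^i - 1) + (\<Sum>i\<in>{i. snd m i \<noteq> 0}. int (snd m i) * (2^i - 1))"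

text \<open>Basis of A_* \<otimes>_{F_2[tau]} A_* over F_2: tau^k (a \<otimes> b).\<close>
type_synonym tens2 = "nat \<times> mono \<times> mono"

definition t2mul :: "tens2 \<Rightarrow> tens2 \<Rightarrow> tens2" where
  "t2mul x y = (case x of (k, a, b) \<Rightarrow> case y of (k', a', b') \<Rightarrow>
     (k + k' + fst (mmul a a') + fst (mmul b b'), snd (mmul a a'), snd (mmul b b')))"

definition vmul2 :: "tens2 set \<Rightarrow> tens2 set \<Rightarrow> tens2 set" where
  "vmul2 X Y = vsum (\<lambda>(x, y). {t2mul x y}) (X \<times> Y)"

definition one2 :: "tens2 set" where
  "one2 = {(0, one_mono, one_mono)}"

definition vpow2 :: "tens2 set \<Rightarrow> nat \<Rightarrow> tens2 set" where
  "vpow2 X p = ((vmul2 X) ^^ p) one2"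

definition coprod_xi :: "nat \<Rightarrow> tens2 set" where
  "coprod_xi k = vsum (\<lambda>i. {(0, xipow (k - i) (2^i), xipow i 1)}) {0..k}"

definition coprod_tau :: "nat \<Rightarrow> tens2 set" where
  "coprod_tau k = vadd (vsum (\<lambda>i. {(0, xipow (k - i) (2^i), tau_mono i)}) {0..k})
                       {(0, tau_mono k, one_mono)}"

text \<open>Coproduct of a monomial (multiplicativity of Delta; tau is primitive and
is the base ring).\<close>
definition coprod :: "mono \<Rightarrow> tens2 set" where
  "coprod m = foldr (\<lambda>i acc. vmul2 (coprod_tau i) acc) (sorted_list_of_set (fst m))
     (foldr (\<lambda>j acc. vmul2 (vpow2 (coprod_xi j) (snd m j)) acc)
        [1..<Suc (Max (insert 0 {i. snd m i \<noteq> 0}))] one2)"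

definition rcoprod :: "mono \<Rightarrow> tens2 set" where
  "rcoprod m = vadd (coprod m) {(0, m, one_mono), (0, one_mono, m)}"

text \<open>F_2-basis of the cobar complex: tau^k [a_1 | ... | a_f] with a_i nonunit
basis monomials (i.e. in the augmentation ideal).\<close>
type_synonym cobar = "nat \<times> mono list"

definition cobar_valid :: "cobar \<Rightarrow> bool" where
  "cobar_valid b = (\<forall>a \<in> set (snd b). mono_valid a \<and> a \<noteq> one_mono)"

definition dcobar :: "cobar \<Rightarrow> cobar set" where
  "dcobar b = (case b of (k, as) \<Rightarrow>
     vsum (\<lambda>(i, (c, a1, a2)). {(k + c, take i as @ [a1, a2] @ drop (Suc i) as)})
          (SIGMA i:{..<length as}. rcoprod (as ! i)))"

text \<open>Basis of Ext_C[rho]'s cochain level: rho^j tau^k [a_1|...|a_f].\<close>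
type_synonym rcobar = "nat \<times> cobar"

definition rcochain :: "rcobar set \<Rightarrow> bool" where
  "rcochain X = (finite X \<and> (\<forall>b \<in> X. cobar_valid (snd b)))"

definition drho :: "rcobar set \<Rightarrow> rcobar set" where
  "drho X = vsum (\<lambda>(j, b). (\<lambda>c. (j, c)) ` dcobar b) X"

text \<open>Tridegree (s, f, w): rho has degree (-1,0,-1), tau has (0,0,-1), and
[a_1|...|a_f] has stem sum |a_i| - f, filtration f, weight sum wt(a_i).\<close>
definition rstem :: "rcobar \<Rightarrow> int" where
  "rstem b = (\<Sum>a\<leftarrow>snd (snd b). mdeg a) - int (length (snd (snd b))) - int (fst b)"

definition rfilt :: "rcobar \<Rightarrow> int" where
  "rfilt b = int (length (snd (snd b)))"

definition rweight :: "rcobar \<Rightarrow> int" where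
  "rweight b = (\<Sum>a\<leftarrow>snd (snd b). mwt a) - int (fst (snd b)) - int (fst b)"

text \<open>Action of a polynomial p in F_2[rho] (encoded as its finite set of exponents).\<close>
definition rho_act :: "nat set \<Rightarrow> rcobar set \<Rightarrow> rcobar set" where
  "rho_act p X = vsum (\<lambda>(l, (j, c)). {(l + j, c)}) (p \<times> X)"

definition E1_cocycles :: "int \<Rightarrow> rcobar set set" where
  "E1_cocycles N = {X. rcochain X \<and> (\<forall>b \<in> X. rstem b + rfilt b - rweight b = N) \<and> drho X = {}}"

definition E1_boundary :: "rcobar set \<Rightarrow> bool" where
  "E1_boundary X = (\<exists>Y. rcochain Y \<and> drho Y = X)"

text \<open>The coweight-N part of E_1 = Ext_C[rho] is the quotient
E1_cocycles N / boundaries.\<close>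
definition E1_part_fg :: "int \<Rightarrow> bool" where
  "E1_part_fg N = (\<exists>gs. set gs \<subseteq> E1_cocycles N \<and>
      (\<forall>X \<in> E1_cocycles N. \<exists>ps. length ps = length gs \<and> (\<forall>p \<in> set ps. finite p) \<and>
         E1_boundary (vadd X (vsum (\<lambda>i. rho_act (ps ! i) (gs ! i)) {..<length gs}))))"

end

theory Submission
  imports Defs
begin

definition dif :: "mono \<Rightarrow> int" where
  "dif m = (\<Sum>i\<in>fst m. 2^i) + (\<Sum>i\<in>{i. snd m i \<noteq> 0}. int (snd m i) * (2^i - 1))"

lemma mdeg_mwt: "mdeg m - mwt m = dif m"
proof -
  have 1: "(\<Sum>i\<in>fst m. (2::int)^(i+1) - 1) - (\<Sum>i\<in>fst m. 2^i - 1) = (\<Sum>i\<in>fst m. 2^i)"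
    by (simp add: sum_subtractf[symmetric])
  have 2: "(\<Sum>i\<in>{i. snd m i \<noteq> 0}. int (snd m i) * (2^(i+1) - 2))
      - (\<Sum>i\<in>{i. snd m i \<noteq> 0}. int (snd m i) * (2^i - 1))
      = (\<Sum>i\<in>{i. snd m i \<noteq> 0}. int (snd m i) * (2^i - 1))"
    by (simp add: sum_subtractf[symmetric] algebra_simps)
  show ?thesis unfolding mdeg_def mwt_def dif_def using 1 2 by linarith
qed

lemma dif_parts_nonneg:
  "0 \<le> (\<Sum>i\<in>fst m. (2::int)^i)" "0 \<le> (\<Sum>i\<in>{i. snd m i \<noteq> 0}. int (snd m i) * (2^i - 1))"
  by (auto intro!: sum_nonneg)

lemma dif_ge_tau:
  assumes "mono_valid m" "i \<in> fst m" shows "2^i \<le> dif m"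
proof -
  have "2^i \<le> (\<Sum>i\<in>fst m. (2::int)^i)"
    using assms by (intro member_le_sum) (auto simp: mono_valid_def)
  then show ?thesis using dif_parts_nonneg[of m] unfolding dif_def by linarith
qed

lemma dif_ge_xi:
  assumes "mono_valid m" "snd m i \<noteq> 0" shows "int (snd m i) * (2^i - 1) \<le> dif m"
proof -
  have "int (snd m i) * (2^i - 1) \<le> (\<Sum>i\<in>{i. snd m i \<noteq> 0}. int (snd m i) * (2^i - 1))"
    using assms by (intro member_le_sum) (auto simp: mono_valid_def)
  then show ?thesis using dif_parts_nonneg[of m] unfolding dif_def by linarith
qed

lemma dif_nonneg: "0 \<le> dif m"
  using dif_parts_nonneg[of m] unfolding dif_def by linarith

lemma dif_pos:
  assumes "mono_valid m" "m \<noteq> one_mono" shows "1 \<le> dif m"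
proof (cases "fst m = {}")
  case False
  then obtain i where "i \<in> fst m" by auto
  then have "2^i \<le> dif m" using dif_ge_tau assms by blast
  moreover have "(1::int) \<le> 2^i" by simp
  ultimately show ?thesis by linarith
next
  case True
  have "snd m \<noteq> (\<lambda>_. 0)" using True assms(2) unfolding one_mono_def
    by (metis prod.collapse)
  then obtain i where i: "snd m i \<noteq> 0" by auto
  then have "i \<noteq> 0" using assms(1) unfolding mono_valid_def by (cases i) auto
  then have "(2::int)^1 \<le> 2^i" by (intro power_increasing) auto
  then have h: "1 \<le> (2::int)^i - 1" by simp
  have h2: "1 \<le> int (snd m i)" using i by simp
  have "1 * 1 \<le> int (snd m i) * (2^i - 1)" by (rule mult_mono[OF h2 h]) auto
  then have "1 \<le> int (snd m i) * (2^i - 1)" by simp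
  then show ?thesis using dif_ge_xi[OF assms(1) i] by linarith
qed


lemma int_lt_pow2: "int i < (2::int)^i"
proof -
  have "i < 2^i" by simp
  then have "int i < int (2^i)" by linarith
  then show ?thesis by simp
qed

lemma finite_funs: "finite {n :: nat \<Rightarrow> nat. (\<forall>i. n i \<le> K) \<and> (\<forall>i>K. n i = 0)}"
  (is "finite ?F")
proof (rule inj_on_finite)
  show "inj_on (\<lambda>n. map n [0..<Suc K]) ?F"
  proof (rule inj_onI)
    fix n n' assume A: "n \<in> ?F" "n' \<in> ?F" and e: "map n [0..<Suc K] = map n' [0..<Suc K]"
    show "n = n'"
    proof
      fix i show "n i = n' i"
      proof (cases "i \<le> K")
        case True then show ?thesis using e by (auto simp: map_eq_conv simp del: upt_Suc)
      next
        case False then show ?thesis using A by auto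
      qed
    qed
  qed
  show "(\<lambda>n. map n [0..<Suc K]) ` ?F \<subseteq> {xs. set xs \<subseteq> {..K} \<and> length xs \<le> Suc K}"
    by auto
  show "finite {xs. set xs \<subseteq> {..K} \<and> length xs \<le> Suc K}"
    by (rule finite_lists_length_le) simp
qed

lemma finite_monos: "finite {m. mono_valid m \<and> dif m \<le> int K}"
proof (rule finite_subset)
  show "{m. mono_valid m \<and> dif m \<le> int K} \<subseteq>
     Pow {..K} \<times> {n :: nat \<Rightarrow> nat. (\<forall>i. n i \<le> K) \<and> (\<forall>i>K. n i = 0)}"
  proof
    fix m assume "m \<in> {m. mono_valid m \<and> dif m \<le> int K}"
    then have v: "mono_valid m" and d: "dif m \<le> int K" by auto
    have t: "i \<le> K" if "i \<in> fst m" for i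
      using dif_ge_tau[OF v that] d int_lt_pow2[of i] by linarith
    have x: "int (snd m i) \<le> int K \<and> int i \<le> int K" if "snd m i \<noteq> 0" for i
    proof -
      have "i \<noteq> 0" using v that unfolding mono_valid_def by (cases i) auto
      then have "(2::int)^1 \<le> 2^i" by (intro power_increasing) auto
      then have h: "1 \<le> (2::int)^i - 1" by simp
      have h2: "1 \<le> int (snd m i)" using that by simp
      have "int (snd m i) \<le> int (snd m i) * (2^i - 1)" using mult_left_mono[of 1 "2^i-1" "int (snd m i)"] h h2 by simp
      moreover have "(2^i - 1) \<le> int (snd m i) * (2^i - 1)" using mult_right_mono[of 1 "int (snd m i)" "2^i-1"] h h2 by simp
      moreover have "int i \<le> 2^i - 1" using int_lt_pow2[of i] by linarith
      ultimately show ?thesis using dif_ge_xi[OF v that] d by linarith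
    qed
    have "\<forall>i. snd m i \<le> K" using x by (metis of_nat_le_iff zero_le)
    moreover have "\<forall>i>K. snd m i = 0" using x by (meson not_le of_nat_le_iff)
    moreover have "fst m \<subseteq> {..K}" using t by auto
    ultimately show "m \<in> Pow {..K} \<times> {n :: nat \<Rightarrow> nat. (\<forall>i. n i \<le> K) \<and> (\<forall>i>K. n i = 0)}"
      by (cases m) auto
  qed
  show "finite (Pow {..K} \<times> {n :: nat \<Rightarrow> nat. (\<forall>i. n i \<le> K) \<and> (\<forall>i>K. n i = 0)})"
    using finite_funs by blast
qed

definition cw :: "cobar \<Rightarrow> int" where
  "cw c = (\<Sum>a\<leftarrow>snd c. dif a) + int (fst c)"

lemma cw_eq: "rstem b + rfilt b - rweight b = cw (snd b)"
proof -
  have "(\<Sum>a\<leftarrow>snd (snd b). mdeg a) - (\<Sum>a\<leftarrow>snd (snd b). mwt a) = (\<Sum>a\<leftarrow>snd (snd b). dif a)"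
    by (simp add: sum_list_subtractf[symmetric] mdeg_mwt)
  then show ?thesis unfolding rstem_def rfilt_def rweight_def cw_def by linarith
qed

lemma sum_list_len: "(\<And>a. a \<in> set xs \<Longrightarrow> 1 \<le> f a) \<Longrightarrow> int (length xs) \<le> (\<Sum>a\<leftarrow>xs. (f a :: int))"
  by (induction xs) (auto, fastforce)

lemma sum_list_mem: "(\<And>a. a \<in> set xs \<Longrightarrow> 0 \<le> f a) \<Longrightarrow> x \<in> set xs \<Longrightarrow> f x \<le> (\<Sum>a\<leftarrow>xs. (f a :: int))"
proof (induction xs)
  case Nil then show ?case by simp
next
  case (Cons y ys)
  have a: "0 \<le> (\<Sum>a\<leftarrow>ys. f a)" using Cons.prems(1) by (intro sum_list_nonneg) auto
  have b: "0 \<le> f y" using Cons.prems(1) by simp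
  show ?case
  proof (cases "x = y")
    case True then show ?thesis using a by simp
  next
    case False
    then have "x \<in> set ys" using Cons.prems(2) by simp
    then have "f x \<le> (\<Sum>a\<leftarrow>ys. f a)" using Cons.IH Cons.prems(1) by simp
    then show ?thesis using b by simp
  qed
qed

lemma finite_cobars: "finite {c. cobar_valid c \<and> cw c = N}"
proof (rule finite_subset)
  let ?M = "{m. mono_valid m \<and> dif m \<le> int (nat N)}"
  show "{c. cobar_valid c \<and> cw c = N} \<subseteq> {..nat N} \<times> {xs. set xs \<subseteq> ?M \<and> length xs \<le> nat N}"
  proof
    fix c assume "c \<in> {c. cobar_valid c \<and> cw c = N}"
    then have v: "\<forall>a\<in>set (snd c). mono_valid a \<and> a \<noteq> one_mono" and e: "cw c = N"
      by (auto simp: cobar_valid_def)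
    have p: "1 \<le> dif a" if "a \<in> set (snd c)" for a using v that dif_pos by blast
    have l: "int (length (snd c)) \<le> (\<Sum>a\<leftarrow>snd c. dif a)" using p sum_list_len by blast
    have m: "dif a \<le> (\<Sum>a\<leftarrow>snd c. dif a)" if "a \<in> set (snd c)" for a
      using sum_list_mem[of "snd c" dif a] dif_nonneg that by blast
    have s: "(\<Sum>a\<leftarrow>snd c. dif a) + int (fst c) = N" using e by (simp add: cw_def)
    have "fst c \<le> nat N" using s l by linarith
    moreover have "length (snd c) \<le> nat N" using s l by linarith
    moreover have "set (snd c) \<subseteq> ?M" using v m s by fastforce
    ultimately show "c \<in> {..nat N} \<times> {xs. set xs \<subseteq> ?M \<and> length xs \<le> nat N}"
      by (cases c) auto
  qed
  show "finite ({..nat N} \<times> {xs. set xs \<subseteq> ?M \<and> length xs \<le> nat N})"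
    using finite_lists_length_le[OF finite_monos] by blast
qed


lemma drho_mem: "(j', c') \<in> drho X \<longleftrightarrow> odd (card {b \<in> X. fst b = j' \<and> c' \<in> dcobar (snd b)})"
proof -
  have "{i \<in> X. (j', c') \<in> (case i of (j, b) \<Rightarrow> (\<lambda>c. (j, c)) ` dcobar b)}
        = {b \<in> X. fst b = j' \<and> c' \<in> dcobar (snd b)}" by auto
  then show ?thesis unfolding drho_def vsum_def by simp
qed

lemma rho_act_mem:
  assumes "fst ` Y \<subseteq> {0}"
  shows "(j, c) \<in> rho_act p Y \<longleftrightarrow> j \<in> p \<and> (0, c) \<in> Y"
proof -
  have "{x \<in> p \<times> Y. (j, c) \<in> (case x of (l, (j', c')) \<Rightarrow> {(l + j', c')})}
        = (if j \<in> p \<and> (0, c) \<in> Y then {(j, (0, c))} else {})"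
    using assms by (auto simp: image_subset_iff)
  then show ?thesis unfolding rho_act_def vsum_def by simp
qed

definition sl :: "rcobar set \<Rightarrow> nat \<Rightarrow> rcobar set" where
  "sl X j = (\<lambda>c. (0, c)) ` {c. (j, c) \<in> X}"

lemma sl_card: "card {b \<in> sl X j. fst b = 0 \<and> c' \<in> dcobar (snd b)}
   = card {b \<in> X. fst b = j \<and> c' \<in> dcobar (snd b)}"
proof -
  have 1: "{b \<in> sl X j. fst b = 0 \<and> c' \<in> dcobar (snd b)} = (\<lambda>c. (0, c)) ` {c. (j, c) \<in> X \<and> c' \<in> dcobar c}"
    unfolding sl_def by auto
  have 2: "{b \<in> X. fst b = j \<and> c' \<in> dcobar (snd b)} = (\<lambda>c. (j, c)) ` {c. (j, c) \<in> X \<and> c' \<in> dcobar c}"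
    by force
  show ?thesis unfolding 1 2 by (simp add: card_image inj_on_def)
qed

lemma sl_cocycle:
  assumes X: "X \<in> E1_cocycles N"
  shows "sl X j \<in> E1_cocycles N"
proof -
  have fin: "finite X" and val: "\<forall>b\<in>X. cobar_valid (snd b)"
    and w: "\<forall>b\<in>X. rstem b + rfilt b - rweight b = N" and d: "drho X = {}"
    using X by (auto simp: E1_cocycles_def rcochain_def)
  have "{c. (j, c) \<in> X} \<subseteq> snd ` X" by force
  then have "finite {c. (j, c) \<in> X}" using fin by (meson finite_imageI finite_subset)
  then have "finite (sl X j)" unfolding sl_def by simp
  moreover have "\<forall>b\<in>sl X j. cobar_valid (snd b)" using val unfolding sl_def by auto
  moreover have "\<forall>b\<in>sl X j. rstem b + rfilt b - rweight b = N"
  proof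
    fix b assume "b \<in> sl X j"
    then obtain c where b: "b = (0, c)" and c: "(j, c) \<in> X" unfolding sl_def by auto
    have "rstem b + rfilt b - rweight b = cw c" using cw_eq[of b] b by simp
    also have "\<dots> = N" using cw_eq[of "(j, c)"] w c by simp
    finally show "rstem b + rfilt b - rweight b = N" .
  qed
  moreover have "drho (sl X j) = {}"
  proof (rule equals0I)
    fix z assume z: "z \<in> drho (sl X j)"
    obtain j' c' where zz: "z = (j', c')" by (cases z)
    show False
    proof (cases "j' = 0")
      case True
      have "odd (card {b \<in> sl X j. fst b = 0 \<and> c' \<in> dcobar (snd b)})"
        using z unfolding zz True drho_mem .
      then have "odd (card {b \<in> X. fst b = j \<and> c' \<in> dcobar (snd b)})"
        unfolding sl_card .
      then have "(j, c') \<in> drho X" using drho_mem by blast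
      then show False using d by simp
    next
      case False
      have e: "{b \<in> sl X j. fst b = j' \<and> c' \<in> dcobar (snd b)} = {}"
        using False unfolding sl_def by auto
      have "odd (card {b \<in> sl X j. fst b = j' \<and> c' \<in> dcobar (snd b)})"
        using z unfolding zz drho_mem .
      then show False unfolding e by simp
    qed
  qed
  ultimately show ?thesis unfolding E1_cocycles_def rcochain_def by blast
qed

theorem lemma5p4:
  fixes N :: int
  shows "E1_part_fg N"
proof -
  define G where "G = {Y \<in> E1_cocycles N. fst ` Y \<subseteq> {0}}"
  have "G \<subseteq> Pow ({0} \<times> {c. cobar_valid c \<and> cw c = N})"
  proof
    fix Y assume "Y \<in> G"
    then have "Y \<in> E1_cocycles N" and f: "fst ` Y \<subseteq> {0}" unfolding G_def by auto
    then have "\<forall>b\<in>Y. cobar_valid (snd b) \<and> cw (snd b) = N"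
      by (auto simp: E1_cocycles_def rcochain_def cw_eq[symmetric])
    then show "Y \<in> Pow ({0} \<times> {c. cobar_valid c \<and> cw c = N})" using f by force
  qed
  moreover have "finite (Pow ({0::nat} \<times> {c. cobar_valid c \<and> cw c = N}))"
    using finite_cobars[of N] by simp
  ultimately have "finite G" by (rule finite_subset)
  then obtain gs where gs: "set gs = G" "distinct gs" using finite_distinct_list by blast
  show ?thesis unfolding E1_part_fg_def
  proof (rule exI[of _ gs], intro conjI ballI)
    show "set gs \<subseteq> E1_cocycles N" using gs unfolding G_def by auto
    fix X assume X: "X \<in> E1_cocycles N"
    have slG: "sl X j \<in> G" for j using sl_cocycle[OF X] unfolding G_def sl_def by auto
    define ps where "ps = map (\<lambda>g. {j \<in> fst ` X. sl X j = g}) gs"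
    have finX: "finite X" using X by (simp add: E1_cocycles_def rcochain_def)
    have eq: "vsum (\<lambda>i. rho_act (ps ! i) (gs ! i)) {..<length gs} = X"
    proof (rule set_eqI)
      fix z :: rcobar
      obtain j c where zz: "z = (j, c)" by (cases z)
      have gfst: "fst ` (gs ! i) \<subseteq> {0}" if "i < length gs" for i
      proof -
        have "gs ! i \<in> G" using nth_mem[OF that] gs(1) by simp
        then show ?thesis unfolding G_def by simp
      qed
      have S: "{i \<in> {..<length gs}. z \<in> rho_act (ps ! i) (gs ! i)}
          = {i \<in> {..<length gs}. j \<in> fst ` X \<and> sl X j = gs ! i \<and> (0, c) \<in> gs ! i}"
      proof (rule Collect_cong)
        fix i
        show "(i \<in> {..<length gs} \<and> z \<in> rho_act (ps ! i) (gs ! i)) =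
              (i \<in> {..<length gs} \<and> j \<in> fst ` X \<and> sl X j = gs ! i \<and> (0, c) \<in> gs ! i)"
        proof (cases "i < length gs")
          case True
          have "ps ! i = {j \<in> fst ` X. sl X j = gs ! i}" unfolding ps_def using True by simp
          then show ?thesis using rho_act_mem[OF gfst[OF True], of j c "ps ! i"] zz True by simp
        qed simp
      qed
      show "z \<in> vsum (\<lambda>i. rho_act (ps ! i) (gs ! i)) {..<length gs} \<longleftrightarrow> z \<in> X"
      proof (cases "(j, c) \<in> X")
        case True
        then have jX: "j \<in> fst ` X" by force
        obtain i0 where i0: "i0 < length gs" "gs ! i0 = sl X j"
          using slG gs(1) by (metis in_set_conv_nth)
        have cin: "(0, c) \<in> sl X j" using True unfolding sl_def by auto
        have E: "{i \<in> {..<length gs}. j \<in> fst ` X \<and> sl X j = gs ! i \<and> (0, c) \<in> gs ! i} = {i0}"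
          using i0 jX cin gs(2) by (auto simp: nth_eq_iff_index_eq)
        show ?thesis unfolding vsum_def mem_Collect_eq S E using True zz by simp
      next
        case False
        have E: "{i \<in> {..<length gs}. j \<in> fst ` X \<and> sl X j = gs ! i \<and> (0, c) \<in> gs ! i} = {}"
          using False unfolding sl_def by auto
        show ?thesis unfolding vsum_def mem_Collect_eq S E using False zz by simp
      qed
    qed
    show "\<exists>ps. length ps = length gs \<and> (\<forall>p\<in>set ps. finite p) \<and>
         E1_boundary (vadd X (vsum (\<lambda>i. rho_act (ps ! i) (gs ! i)) {..<length gs}))"
    proof (intro exI conjI)
      show "length ps = length gs" unfolding ps_def by simp
      show "\<forall>p\<in>set ps. finite p" unfolding ps_def using finX by auto
      have "drho {} = {}" unfolding drho_def vsum_def by simp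
      then have "E1_boundary {}" unfolding E1_boundary_def rcochain_def by blast
      then show "E1_boundary (vadd X (vsum (\<lambda>i. rho_act (ps ! i) (gs ! i)) {..<length gs}))"
        unfolding eq vadd_def by simp
    qed
  qed
qed

end
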